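(* In the setting below, for every nonempty $A\subseteq[n]$: $\Pr_{\psi\sim\Psi}(E_1(\psi)\wedge E_2(\psi)\wedge\neg E_3(\psi))\le 2^{-6}$.
   Context: $[N]:=\{0,\dots,N-1\}$. Fix integers $n\ge1$ and real $0<\varepsilon<1$. Let $b:=2^{\lceil\log_2(9\cdot 2^{23}\varepsilon^{-2})\rceil}$ and $k:=\lceil\tfrac{15}{2}\ln b+16\rceil$. Hash families: for $d\ge1$, identify $[2^d]$ with $\mathrm{GF}(2^d)$ via binary representation. For $k'\ge1$, $N\le 2^d$, $c\le d$, $\mathcal H_{k'}([N],[2^c])$ is the uniform distribution over tuples $(a_0,\dots,a_{k'-1})\in\mathrm{GF}(2^d)^{k'}$, each giving $x\mapsto(\sum_ia_ix^i)\bmod 2^c$ on $[N]$; $\mathcal G_{k'}([N])$ is uniform over the same tuples giving $x\mapsto\mathrm{tz}(\sum_ia_ix^i)$, $\mathrm{tz}(y)$ = number of trailing zeros of the $d$-bit representation of $y$ ($\mathrm{tz}(0)=d$). Here $d$ is a fixed integer with $2^d\ge N$, $d\ge c$. $\Psi:=\mathcal G_2([n])\times\mathcal H_2([n],[2^5b^2])\times\mathcal H_k([2^5b^2],[b])$ with the uniform product distribution; $\psi=(f,g,h)$. For fixed nonempty $A\subseteq[n]$: $t(f):=\max_{a\in A}f(a)-\log_2b+9$; $s(f):=\max(0,t(f))$; $R(f):=\{a\in A: f(a)\ge s(f)\}$. Events: $E_1(\psi)$: $2^{-16}b\le 2^{-t(f)}|A|\le 2^{-1}b$; $E_2(\psi)$: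 $\big||R(f)|-2^{-s(f)}|A|\big|\le\frac{\varepsilon}{3}2^{-s(f)}|A|$; $E_3(\psi)$: $g(a)\ne g(a')$ for all distinct $a,a'\in R(f)$. *)

theory Defs
  imports "HOL-Probability.Probability"
begin

definition lb_of :: "real \<Rightarrow> nat" where
  "lb_of \<epsilon> = nat \<lceil>log 2 (9 * 2^23 / \<epsilon>\<^sup>2)\<rceil>"
definition b_of :: "real \<Rightarrow> nat" where
  "b_of \<epsilon> = 2 ^ lb_of \<epsilon>"
definition k_of :: "real \<Rightarrow> nat" where
  "k_of \<epsilon> = nat \<lceil>15 / 2 * ln (real (b_of \<epsilon>)) + 16\<rceil>"

text \<open>An identification of the set [2^d] with a field via binary representation:
  enc is a bijection onto [2^d] under which field addition is bitwise xor.\<close>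
definition gf_enc :: "nat \<Rightarrow> ('a::field \<Rightarrow> nat) \<Rightarrow> bool" where
  "gf_enc d enc \<longleftrightarrow> bij_betw enc UNIV {..<2^d} \<and> (\<forall>x y. enc (x + y) = xor (enc x) (enc y))"

definition tz :: "nat \<Rightarrow> nat \<Rightarrow> nat" where
  "tz d y = (if y = 0 then d else (LEAST i. odd (y div 2 ^ i)))"

definition seeds :: "nat \<Rightarrow> (nat \<Rightarrow> 'a) set" where
  "seeds k = PiE {..<k} (\<lambda>_. UNIV)"

definition poly_eval :: "('a::field \<Rightarrow> nat) \<Rightarrow> nat \<Rightarrow> (nat \<Rightarrow> 'a) \<Rightarrow> nat \<Rightarrow> 'a" where
  "poly_eval enc k a x = (\<Sum>i<k. a i * (inv enc x) ^ i)"

definition hashH :: "('a::field \<Rightarrow> nat) \<Rightarrow> nat \<Rightarrow> nat \<Rightarrow> (nat \<Rightarrow> 'a) \<Rightarrow> nat \<Rightarrow> nat" where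
  "hashH enc c k a x = enc (poly_eval enc k a x) mod 2 ^ c"

definition hashG :: "('a::field \<Rightarrow> nat) \<Rightarrow> nat \<Rightarrow> nat \<Rightarrow> (nat \<Rightarrow> 'a) \<Rightarrow> nat \<Rightarrow> nat" where
  "hashG enc d k a x = tz d (enc (poly_eval enc k a x))"

definition t_of :: "nat \<Rightarrow> nat set \<Rightarrow> (nat \<Rightarrow> nat) \<Rightarrow> real" where
  "t_of b A f = real (Max (f ` A)) - log 2 (real b) + 9"
definition s_of :: "nat \<Rightarrow> nat set \<Rightarrow> (nat \<Rightarrow> nat) \<Rightarrow> real" where
  "s_of b A f = max 0 (t_of b A f)"
definition R_of :: "nat \<Rightarrow> nat set \<Rightarrow> (nat \<Rightarrow> nat) \<Rightarrow> nat set" where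
  "R_of b A f = {a \<in> A. real (f a) \<ge> s_of b A f}"

definition E1 :: "nat \<Rightarrow> nat set \<Rightarrow> (nat \<Rightarrow> nat) \<Rightarrow> bool" where
  "E1 b A f \<longleftrightarrow> 2 powr (-16) * real b \<le> 2 powr (- t_of b A f) * real (card A)
     \<and> 2 powr (- t_of b A f) * real (card A) \<le> 2 powr (-1) * real b"
definition E2 :: "real \<Rightarrow> nat \<Rightarrow> nat set \<Rightarrow> (nat \<Rightarrow> nat) \<Rightarrow> bool" where
  "E2 \<epsilon> b A f \<longleftrightarrow> \<bar>real (card (R_of b A f)) - 2 powr (- s_of b A f) * real (card A)\<bar>
     \<le> \<epsilon> / 3 * 2 powr (- s_of b A f) * real (card A)"
definition E3 :: "nat \<Rightarrow> nat set \<Rightarrow> (nat \<Rightarrow> nat) \<Rightarrow> (nat \<Rightarrow> nat) \<Rightarrow> bool" where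
  "E3 b A f g \<longleftrightarrow> (\<forall>a\<in>R_of b A f. \<forall>a'\<in>R_of b A f. a \<noteq> a' \<longrightarrow> g a \<noteq> g a')"

end

theory Submission imports Defs begin

lemma enc_facts:
  assumes "gf_enc d enc"
  shows "finite (UNIV :: 'a::field set)" "CARD('a) = 2^d" "inj (enc :: 'a \<Rightarrow> nat)"
    "\<And>x. x < 2^d \<Longrightarrow> enc (inv enc x) = x" "\<And>v. enc v < 2^d"
proof -
  have b: "bij_betw enc (UNIV::'a set) {..<2^d}" using assms unfolding gf_enc_def by blast
  show "finite (UNIV :: 'a::field set)" using bij_betw_finite[OF b] by simp
  show "CARD('a) = 2^d" using bij_betw_same_card[OF b] by simp
  show "inj enc" using b bij_betw_def by blast
  show "\<And>x. x < 2^d \<Longrightarrow> enc (inv enc x) = x" using b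
    by (metis bij_betw_inv_into_right lessThan_iff)
  show "\<And>v. enc v < 2^d" using b bij_betwE by blast
qed

lemma poly2: "poly_eval enc 2 a x = a 0 + a 1 * inv enc x"
  by (simp add: poly_eval_def numeral_2_eq_2)

lemma seeds_finite:
  assumes "finite (UNIV :: 'a set)" shows "finite (seeds k :: (nat \<Rightarrow> 'a) set)"
  unfolding seeds_def using assms by (intro finite_PiE) auto

lemma seeds_ne: "seeds k \<noteq> {}"
  unfolding seeds_def by (simp add: PiE_eq_empty_iff)

lemma card_seeds: "card (seeds k :: (nat \<Rightarrow> 'a) set) = CARD('a) ^ k"
  unfolding seeds_def by (simp add: card_PiE)

lemma fiber_card:
  fixes enc :: "'a::field \<Rightarrow> nat"
  assumes "gf_enc d enc" "c \<le> d"
  shows "card {v. enc v mod 2^c = r} \<le> 2^(d-c)"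
proof -
  note e = enc_facts[OF assms(1)]
  have i1: "inj_on (\<lambda>v. enc v div 2^c) {v. enc v mod 2^c = r}"
  proof (rule inj_onI)
    fix x y assume "x \<in> {v. enc v mod 2^c = r}" "y \<in> {v. enc v mod 2^c = r}"
      "enc x div 2^c = enc y div 2^c"
    then have "enc x div 2^c * 2^c + enc x mod 2^c = enc y div 2^c * 2^c + enc y mod 2^c" by simp
    then have "enc x = enc y" by (simp only: div_mult_mod_eq)
    then show "x = y" using e(3) by (simp add: inj_eq)
  qed
  have i2: "(\<lambda>v. enc v div 2^c) ` {v. enc v mod 2^c = r} \<subseteq> {..<2^(d-c)}"
  proof
    fix z assume "z \<in> (\<lambda>v. enc v div 2^c) ` {v. enc v mod 2^c = r}"
    then obtain v where z: "z = enc v div 2^c" by blast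
    have "enc v < 2^(d-c) * 2^c" using e(5)[of v] assms(2)
      by (simp add: power_add[symmetric])
    then show "z \<in> {..<2^(d-c)}" using z by (simp add: less_mult_imp_div_less)
  qed
  have "card {v. enc v mod 2^c = r} \<le> card {..<(2::nat)^(d-c)}"
    by (rule card_inj_on_le[OF i1 i2]) simp
  then show ?thesis by simp
qed

lemma collision:
  fixes enc :: "'a::field \<Rightarrow> nat"
  assumes "gf_enc d enc" "c \<le> d" "x < 2^d" "y < 2^d" "x \<noteq> y"
  shows "card {a \<in> seeds 2. hashH enc c 2 a x = hashH enc c 2 a y} * 2^c \<le> card (seeds 2 :: (nat \<Rightarrow> 'a) set)"
proof -
  note e = enc_facts[OF assms(1)]
  define X where "X = inv enc x"
  define Y where "Y = inv enc y"
  have XY: "X \<noteq> Y" using e(4)[OF assms(3)] e(4)[OF assms(4)] assms(5) X_def Y_def by metis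
  define T where "T = {a \<in> seeds 2. hashH enc c 2 a x = hashH enc c 2 a y}"
  define \<phi> where "\<phi> = (\<lambda>a::nat\<Rightarrow>'a. (a 0 + a 1 * X, a 0 + a 1 * Y))"
  define U where "U = (SIGMA u:(UNIV::'a set). {v. enc v mod 2^c = enc u mod 2^c})"
  have inj: "inj_on \<phi> T"
  proof (rule inj_onI)
    fix a a' assume a: "a \<in> T" "a' \<in> T" "\<phi> a = \<phi> a'"
    then have 1: "a 0 + a 1 * X = a' 0 + a' 1 * X" "a 0 + a 1 * Y = a' 0 + a' 1 * Y"
      by (auto simp: \<phi>_def)
    have "(a 0 + a 1 * X) - (a 0 + a 1 * Y) = (a' 0 + a' 1 * X) - (a' 0 + a' 1 * Y)"
      using 1 by simp
    then have "a 1 * (X - Y) = a' 1 * (X - Y)" by (simp add: right_diff_distrib)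
    then have h1: "a 1 = a' 1" using XY by simp
    then have h0: "a 0 = a' 0" using 1 by simp
    have "a \<in> seeds 2" "a' \<in> seeds 2" using a T_def by auto
    moreover have "a i = a' i" if "i \<in> {..<2::nat}" for i
    proof -
      have "i = 0 \<or> i = 1" using that by auto
      then show ?thesis using h0 h1 by auto
    qed
    ultimately show "a = a'" unfolding seeds_def by (metis PiE_ext)
  qed
  have img: "\<phi> ` T \<subseteq> U"
    by (auto simp: T_def U_def \<phi>_def hashH_def poly2 X_def Y_def)
  have finU: "finite U" unfolding U_def by (intro finite_SigmaI) (auto intro: finite_subset[OF subset_UNIV e(1)] e(1))
  have c1: "card T \<le> card U" using card_inj_on_le[OF inj img finU] .
  have c2: "card U = (\<Sum>u\<in>UNIV. card {v. enc v mod 2^c = enc u mod 2^c})"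
    unfolding U_def by (intro card_SigmaI) (auto intro: finite_subset[OF subset_UNIV e(1)] e(1))
  have c3: "(\<Sum>u\<in>UNIV. card {v. enc v mod 2^c = enc u mod 2^c}) \<le> (\<Sum>u\<in>(UNIV::'a set). 2^(d-c))"
    by (intro sum_mono fiber_card[OF assms(1,2)])
  have c4: "(\<Sum>u\<in>(UNIV::'a set). (2::nat)^(d-c)) = 2^d * 2^(d-c)" using e(2) by simp
  have c5: "card T \<le> 2^d * 2^(d-c)" using c1 c2 c3 c4 by linarith
  have c6: "card T * 2^c \<le> 2^d * 2^(d-c) * 2^c" using c5 by (rule mult_right_mono) simp
  have c7: "(2::nat)^d * 2^(d-c) * 2^c = 2^d * 2^d" using assms(2)
    by (simp add: mult.assoc power_add[symmetric])
  have c8: "(2::nat)^d * 2^d = card (seeds 2 :: (nat \<Rightarrow> 'a) set)" using e(2) by (simp add: card_seeds power2_eq_square)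
  show ?thesis unfolding T_def[symmetric] using c6 c7 c8 by simp
qed

lemma R_bound:
  assumes "E1 b A f" "E2 \<epsilon> b A f" "\<epsilon> < 1" "0 < \<epsilon>"
  shows "real (card (R_of b A f)) \<le> 2/3 * real b"
proof -
  have st: "t_of b A f \<le> s_of b A f" unfolding s_of_def by simp
  have p: "2 powr (- s_of b A f) \<le> 2 powr (- t_of b A f)" using st by simp
  have "2 powr (- s_of b A f) * real (card A) \<le> 2 powr (- t_of b A f) * real (card A)"
    using p by (intro mult_right_mono) auto
  also have "\<dots> \<le> 2 powr (-1) * real b" using assms(1) unfolding E1_def by simp
  finally have u: "2 powr (- s_of b A f) * real (card A) \<le> real b / 2" by (simp add: powr_minus_divide)
  have h: "real (card (R_of b A f)) - 2 powr (- s_of b A f) * real (card A) \<le> \<epsilon> / 3 * 2 powr (- s_of b A f) * real (card A)"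
    using assms(2) unfolding E2_def by (rule abs_le_D1)
  have "real (card (R_of b A f)) \<le> (1 + \<epsilon>/3) * (2 powr (- s_of b A f) * real (card A))"
    using h by (simp add: distrib_right mult.assoc)
  also have "\<dots> \<le> (1 + \<epsilon>/3) * (real b / 2)"
    using u assms(3,4) by (intro mult_left_mono) auto
  also have "\<dots> \<le> 4/3 * (real b / 2)" using assms(3) by (intro mult_right_mono) auto
  finally show ?thesis by simp
qed

lemma coll_set:
  fixes enc :: "'a::field \<Rightarrow> nat"
  assumes "gf_enc d enc" "c \<le> d" "finite R" "R \<subseteq> {..<2^d}"
  shows "real (card {a \<in> seeds 2. \<exists>x\<in>R. \<exists>y\<in>R. x \<noteq> y \<and> hashH enc c 2 a x = hashH enc c 2 a y}) * 2^c
     \<le> real (card R)^2 * real (card (seeds 2 :: (nat \<Rightarrow> 'a) set))"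
proof -
  define I where "I = {p \<in> R \<times> R. fst p \<noteq> snd p}"
  define B where "B = (\<lambda>p. {a \<in> (seeds 2 :: (nat \<Rightarrow> 'a) set). hashH enc c 2 a (fst p) = hashH enc c 2 a (snd p)})"
  have eq: "{a \<in> seeds 2. \<exists>x\<in>R. \<exists>y\<in>R. x \<noteq> y \<and> hashH enc c 2 a x = hashH enc c 2 a y} = (\<Union>p\<in>I. B p)"
  proof (intro set_eqI iffI)
    fix a assume "a \<in> {a \<in> seeds 2. \<exists>x\<in>R. \<exists>y\<in>R. x \<noteq> y \<and> hashH enc c 2 a x = hashH enc c 2 a y}"
    then obtain x y where xy: "a \<in> seeds 2" "x\<in>R" "y\<in>R" "x\<noteq>y" "hashH enc c 2 a x = hashH enc c 2 a y" by blast
    then have "(x,y) \<in> I" "a \<in> B (x,y)" unfolding I_def B_def by auto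
    then show "a \<in> (\<Union>p\<in>I. B p)" by blast
  next
    fix a assume "a \<in> (\<Union>p\<in>I. B p)"
    then obtain x y where "(x,y)\<in>I" "a \<in> B (x,y)" by auto
    then have xy: "a \<in> seeds 2" "x\<in>R" "y\<in>R" "x\<noteq>y" "hashH enc c 2 a x = hashH enc c 2 a y"
      unfolding I_def B_def by auto
    then show "a \<in> {a \<in> seeds 2. \<exists>x\<in>R. \<exists>y\<in>R. x \<noteq> y \<and> hashH enc c 2 a x = hashH enc c 2 a y}"
      by blast
  qed
  have finI: "finite I" unfolding I_def using assms(3) by simp
  have "card (\<Union>p\<in>I. B p) \<le> (\<Sum>p\<in>I. card (B p))" by (rule card_UN_le[OF finI])
  then have "real (card (\<Union>p\<in>I. B p)) \<le> (\<Sum>p\<in>I. real (card (B p)))"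
    by (metis of_nat_le_iff of_nat_sum)
  then have "real (card (\<Union>p\<in>I. B p)) * 2^c \<le> (\<Sum>p\<in>I. real (card (B p))) * 2^c"
    by (rule mult_right_mono) simp
  also have "\<dots> = (\<Sum>p\<in>I. real (card (B p)) * 2^c)" by (simp add: sum_distrib_right)
  also have "\<dots> \<le> (\<Sum>p\<in>I. real (card (seeds 2 :: (nat \<Rightarrow> 'a) set)))"
  proof (rule sum_mono)
    fix p assume "p \<in> I"
    then have "fst p < 2^d" "snd p < 2^d" "fst p \<noteq> snd p" using assms(4) unfolding I_def by auto
    from collision[OF assms(1,2) this] have "card (B p) * 2^c \<le> card (seeds 2 :: (nat \<Rightarrow> 'a) set)"
      unfolding B_def .
    then show "real (card (B p)) * 2^c \<le> real (card (seeds 2 :: (nat \<Rightarrow> 'a) set))"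
      by (metis of_nat_le_iff of_nat_mult of_nat_numeral of_nat_power)
  qed
  also have "\<dots> = real (card I) * real (card (seeds 2 :: (nat \<Rightarrow> 'a) set))" by simp
  also have "\<dots> \<le> real (card R)^2 * real (card (seeds 2 :: (nat \<Rightarrow> 'a) set))"
  proof (intro mult_right_mono)
    have "card I \<le> card (R \<times> R)" unfolding I_def using assms(3) by (intro card_mono) auto
    then show "real (card I) \<le> real (card R)^2" by (simp add: card_cartesian_product power2_eq_square flip: of_nat_mult)
  qed simp
  finally show ?thesis unfolding eq .
qed

lemma prob_bound:
  assumes "finite S1" "finite S2" "finite S3" "S1 \<noteq> {}" "S2 \<noteq> {}" "S3 \<noteq> {}"
    and "\<And>a1. a1 \<in> S1 \<Longrightarrow> P a1 \<Longrightarrow> real (card {a2 \<in> S2. Q a1 a2}) \<le> real (card S2) / 64"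
  shows "measure_pmf.prob (pmf_of_set (S1 \<times> S2 \<times> S3)) {(a1, a2, a3). P a1 \<and> Q a1 a2} \<le> 1/64"
proof -
  let ?S = "S1 \<times> S2 \<times> S3"
  have fin: "finite ?S" "?S \<noteq> {}" using assms(1-6) by auto
  have eq: "?S \<inter> {(a1, a2, a3). P a1 \<and> Q a1 a2} = (SIGMA a1:{a1 \<in> S1. P a1}. {a2 \<in> S2. Q a1 a2} \<times> S3)"
    by auto
  have "card (?S \<inter> {(a1, a2, a3). P a1 \<and> Q a1 a2}) = (\<Sum>a1\<in>{a1 \<in> S1. P a1}. card ({a2 \<in> S2. Q a1 a2} \<times> S3))"
    unfolding eq using assms(1-3) by (intro card_SigmaI) auto
  then have "real (card (?S \<inter> {(a1, a2, a3). P a1 \<and> Q a1 a2})) = (\<Sum>a1\<in>{a1 \<in> S1. P a1}. real (card {a2 \<in> S2. Q a1 a2}) * real (card S3))"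
    by (simp add: card_cartesian_product)
  also have "\<dots> \<le> (\<Sum>a1\<in>{a1 \<in> S1. P a1}. real (card S2) / 64 * real (card S3))"
    using assms(7) by (intro sum_mono mult_right_mono) auto
  also have "\<dots> = real (card {a1 \<in> S1. P a1}) * (real (card S2) / 64 * real (card S3))" by simp
  also have "\<dots> \<le> real (card S1) * (real (card S2) / 64 * real (card S3))"
    using assms(1) by (intro mult_right_mono) (auto intro: card_mono)
  also have "\<dots> = real (card ?S) / 64" by (simp add: card_cartesian_product)
  finally have "real (card (?S \<inter> {(a1, a2, a3). P a1 \<and> Q a1 a2})) / real (card ?S) \<le> 1/64"
    using fin by (simp add: divide_le_eq card_gt_0_iff)
  then show ?thesis using measure_pmf_of_set[OF fin(2) fin(1)] by simp
qed

theorem lemma11: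
  fixes n :: nat and \<epsilon> :: real and A :: "nat set"
    and enc1 :: "'a::field \<Rightarrow> nat" and enc2 :: "'b::field \<Rightarrow> nat" and enc3 :: "'c::field \<Rightarrow> nat"
    and d1 d2 d3 :: nat
  assumes "n \<ge> 1" and "0 < \<epsilon>" and "\<epsilon> < 1"
    and "A \<subseteq> {..<n}" and "A \<noteq> {}"
    and "gf_enc d1 enc1" and "n \<le> 2 ^ d1"
    and "gf_enc d2 enc2" and "n \<le> 2 ^ d2" and "5 + 2 * lb_of \<epsilon> \<le> d2"
    and "gf_enc d3 enc3" and "2 ^ 5 * (b_of \<epsilon>)\<^sup>2 \<le> 2 ^ d3" and "lb_of \<epsilon> \<le> d3"
  shows "measure_pmf.prob (pmf_of_set (seeds 2 \<times> seeds 2 \<times> seeds (k_of \<epsilon>)))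
     {(a1, a2, a3).
        let f = hashG enc1 d1 2 a1;
            g = hashH enc2 (5 + 2 * lb_of \<epsilon>) 2 a2;
            h = hashH enc3 (lb_of \<epsilon>) (k_of \<epsilon>) a3;
            b = b_of \<epsilon>
        in E1 b A f \<and> E2 \<epsilon> b A f \<and> \<not> E3 b A f g}
   \<le> 2 powr (-6)"
proof -
  note e1 = enc_facts[OF assms(6)]
  note e2 = enc_facts[OF assms(8)]
  note e3 = enc_facts[OF assms(11)]
  define b where "b = b_of \<epsilon>"
  define c where "c = 5 + 2 * lb_of \<epsilon>"
  define f where "f = (\<lambda>a1. hashG enc1 d1 2 a1)"
  define g where "g = (\<lambda>a2. hashH enc2 c 2 a2)"
  define P where "P = (\<lambda>a1. E1 b A (f a1) \<and> E2 \<epsilon> b A (f a1))"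
  define Q where "Q = (\<lambda>a1 a2. \<not> E3 b A (f a1) (g a2))"
  have seteq: "{(a1, a2, a3).
        let f = hashG enc1 d1 2 a1;
            g = hashH enc2 (5 + 2 * lb_of \<epsilon>) 2 a2;
            h = hashH enc3 (lb_of \<epsilon>) (k_of \<epsilon>) a3;
            b = b_of \<epsilon>
        in E1 b A f \<and> E2 \<epsilon> b A f \<and> \<not> E3 b A f g} = {(a1, a2, a3::nat \<Rightarrow> 'c). P a1 \<and> Q a1 a2}"
    unfolding P_def Q_def f_def g_def b_def c_def by (simp add: Let_def)
  have bpos: "real b > 0" unfolding b_def b_of_def by simp
  have twoc: "(2::real)^c = 32 * (real b)^2"
    unfolding b_def b_of_def c_def by (simp add: power_add power_mult_distrib flip: power_mult)
  have cd: "c \<le> d2" using assms(10) unfolding c_def .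
  have "measure_pmf.prob (pmf_of_set ((seeds 2 :: (nat \<Rightarrow> 'a) set) \<times> (seeds 2 :: (nat \<Rightarrow> 'b) set) \<times> (seeds (k_of \<epsilon>) :: (nat \<Rightarrow> 'c) set)))
     {(a1, a2, a3). P a1 \<and> Q a1 a2} \<le> 1/64"
  proof (rule prob_bound)
    show "finite (seeds 2 :: (nat \<Rightarrow> 'a) set)" by (rule seeds_finite[OF e1(1)])
    show "finite (seeds 2 :: (nat \<Rightarrow> 'b) set)" by (rule seeds_finite[OF e2(1)])
    show "finite (seeds (k_of \<epsilon>) :: (nat \<Rightarrow> 'c) set)" by (rule seeds_finite[OF e3(1)])
  next
    fix a1 :: "nat \<Rightarrow> 'a" assume "a1 \<in> seeds 2" "P a1"
    define R where "R = R_of b A (f a1)"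
    have rb: "real (card R) \<le> 2/3 * real b"
      unfolding R_def using R_bound `P a1` assms(2,3) unfolding P_def by blast
    have RA: "R \<subseteq> A" unfolding R_def R_of_def by auto
    have finR: "finite R" using RA assms(4) finite_subset by (metis finite_lessThan)
    have Rd: "R \<subseteq> {..<2^d2}" using RA assms(4,9) by auto
    have qeq: "{a2 \<in> (seeds 2 :: (nat \<Rightarrow> 'b) set). Q a1 a2} =
      {a \<in> seeds 2. \<exists>x\<in>R. \<exists>y\<in>R. x \<noteq> y \<and> hashH enc2 c 2 a x = hashH enc2 c 2 a y}"
      unfolding Q_def E3_def R_def g_def by auto
    define C where "C = real (card {a2 \<in> (seeds 2 :: (nat \<Rightarrow> 'b) set). Q a1 a2})"
    define N where "N = real (card (seeds 2 :: (nat \<Rightarrow> 'b) set))"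
    have "C * 2^c \<le> real (card R)^2 * N"
      unfolding C_def N_def qeq by (rule coll_set[OF assms(8) cd finR Rd])
    also have "\<dots> \<le> (2/3 * real b)^2 * N"
      unfolding N_def by (intro mult_right_mono power_mono rb) auto
    also have "(2/3 * real b)^2 = 4/9 * (real b)^2" by (simp add: power2_eq_square)
    finally have h: "C * (32 * (real b)^2) \<le> 4/9 * (real b)^2 * N" unfolding twoc .
    have "(real b)^2 * (C * 32) = C * (32 * (real b)^2)" by (simp add: mult_ac)
    also have "\<dots> \<le> 4/9 * (real b)^2 * N" by (rule h)
    also have "\<dots> = (real b)^2 * (4/9 * N)" by (simp add: mult_ac)
    finally have "(real b)^2 * (C * 32) \<le> (real b)^2 * (4/9 * N)" .
    then have "C * 32 \<le> 4/9 * N" using bpos by (simp add: mult_le_cancel_left_pos)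
    moreover have "N \<ge> 0" unfolding N_def by simp
    ultimately show "C \<le> N / 64" by simp
  qed (auto simp: seeds_ne)
  moreover have "(2::real) powr (-6) = 1/64" by (simp add: powr_minus powr_realpow)
  ultimately show ?thesis unfolding seteq by simp
qed

end
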